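(* Let $q\ge 2$ and let $(\epsilon_n)_{n\ge1}$ be positive reals with $\epsilon_n\to 0$. Then there exist, for all sufficiently large $n$, ID codes for $\Pi^q_n$ with $M_n\ge 2^{\epsilon_n n^{q-1}}$ messages, type-I error probability $\lambda_{1,n}=0$ and type-II error probability $\lambda_{2,n}$, such that $\lambda_{2,n}\to 0$ as $n\to\infty$.
   Context: Fix an integer $q\ge 2$ and let $\mathcal A_q=\{1,\dots,q\}$. For $n\ge 1$, $S_n$ is the symmetric group on $\{1,\dots,n\}$, and for $\mathbf x\in\mathcal A_q^n$, $\sigma\in S_n$, we write $\sigma\mathbf x=(x_{\sigma^{-1}(1)},\dots,x_{\sigma^{-1}(n)})$. The $n$-block $q$-ary uniform permutation channel $\Pi^q_n$ has input and output alphabet $\mathcal A_q^n$ and transition probabilities $\Pi^q_n(\mathbf y\mid\mathbf x)=\frac{1}{n!}\sum_{\sigma\in S_n}\mathbf 1\{\mathbf y=\sigma\mathbf x\}$; $\Pi^q$ denotes the family $(\Pi^q_n)_{n\ge1}$. An ID code (with deterministic decoders) with $M$ messages for $\Pi^q_n$ (an "$(n,M,\lambda_1,\lambda_2)$ ID code") is a family $\{(Q_i,\mathcal D_i)\}_{i=1}^M$ where each $Q_i$ is a probability distribution on $\mathcal A_q^n$ (the stochastic encoder of message $i$) and $\mathcal D_i\subseteq\mathcal A_q^n$ (the acceptance region of message $i$). Its error probabilities are $\lambda_{i\to j}=\sum_{\mathbf x}Q_i(\mathbf x)\sum_{\mathbf y\in\mathcal D_j}\Pi^q_n(\mathbf y\mid\mathbf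 x)$ for $i\ne j$ and $\lambda_{i\not\to i}=\sum_{\mathbf x}Q_i(\mathbf x)\sum_{\mathbf y\notin\mathcal D_i}\Pi^q_n(\mathbf y\mid\mathbf x)$; the type-I error probability is $\lambda_1=\max_i\lambda_{i\not\to i}$ and the type-II error probability is $\lambda_2=\max_{i\ne j}\lambda_{i\to j}$. *)

theory Defs
  imports "HOL-Analysis.Analysis" "HOL-Combinatorics.Permutations"
begin

definition words :: "nat \<Rightarrow> nat \<Rightarrow> nat list set" where
  "words q n = {xs. length xs = n \<and> set xs \<subseteq> {1..q}}"

definition perm_word :: "(nat \<Rightarrow> nat) \<Rightarrow> nat list \<Rightarrow> nat list" where
  "perm_word \<sigma> xs = map (\<lambda>i. xs ! (inv \<sigma> i)) [0..<length xs]"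

definition perm_channel :: "nat \<Rightarrow> nat list \<Rightarrow> nat list \<Rightarrow> real" where
  "perm_channel n y x =
     (1 / fact n) * real (card {\<sigma>. \<sigma> permutes {..<n} \<and> y = perm_word \<sigma> x})"

definition err_to :: "nat \<Rightarrow> nat \<Rightarrow> (nat list \<Rightarrow> real) \<Rightarrow> nat list set \<Rightarrow> real" where
  "err_to q n Qi Dj = (\<Sum>x\<in>words q n. Qi x * (\<Sum>y\<in>Dj. perm_channel n y x))"

definition err_not_to :: "nat \<Rightarrow> nat \<Rightarrow> (nat list \<Rightarrow> real) \<Rightarrow> nat list set \<Rightarrow> real" where
  "err_not_to q n Qi Di = (\<Sum>x\<in>words q n. Qi x * (\<Sum>y\<in>words q n - Di. perm_channel n y x))"

definition is_ID_code :: "nat \<Rightarrow> nat \<Rightarrow> nat \<Rightarrow> (nat \<Rightarrow> nat list \<Rightarrow> real) \<Rightarrow> (nat \<Rightarrow> nat list set) \<Rightarrow> bool" where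
  "is_ID_code q n M Q D \<longleftrightarrow>
     (\<forall>i\<in>{1..M}. (\<forall>x\<in>words q n. 0 \<le> Q i x) \<and> (\<forall>x. x \<notin> words q n \<longrightarrow> Q i x = 0)
        \<and> (\<Sum>x\<in>words q n. Q i x) = 1 \<and> D i \<subseteq> words q n)"

text \<open>Type-I / type-II error probabilities (maxima; 0 is added only so that the max
  is defined when the index set is empty -- all errors are nonnegative).\<close>
definition type1_err :: "nat \<Rightarrow> nat \<Rightarrow> nat \<Rightarrow> (nat \<Rightarrow> nat list \<Rightarrow> real) \<Rightarrow> (nat \<Rightarrow> nat list set) \<Rightarrow> real" where
  "type1_err q n M Q D = Max (insert 0 {err_not_to q n (Q i) (D i) | i. i \<in> {1..M}})"

definition type2_err :: "nat \<Rightarrow> nat \<Rightarrow> nat \<Rightarrow> (nat \<Rightarrow> nat list \<Rightarrow> real) \<Rightarrow> (nat \<Rightarrow> nat list set) \<Rightarrow> real" where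
  "type2_err q n M Q D =
     Max (insert 0 {err_to q n (Q i) (D j) | i j. i \<in> {1..M} \<and> j \<in> {1..M} \<and> i \<noteq> j})"

end

theory Submission
  imports Defs
begin

lemma perm_word_props:
  assumes "\<sigma> permutes {..<n}" "x \<in> words q n"
  shows "perm_word \<sigma> x \<in> words q n \<and> mset (perm_word \<sigma> x) = mset x"
proof -
  have len: "length x = n" using assms(2) by (simp add: words_def)
  have pw: "perm_word \<sigma> x = permute_list (inv \<sigma>) x"
    by (simp add: perm_word_def permute_list_def)
  have "inv \<sigma> permutes {..<length x}" using permutes_inv[OF assms(1)] len by simp
  then have m: "mset (perm_word \<sigma> x) = mset x" using pw by simp
  then have "set (perm_word \<sigma> x) = set x" by (metis set_mset_mset)
  moreover have "length (perm_word \<sigma> x) = n" using m len by (metis size_mset)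
  ultimately show ?thesis using assms(2) m by (simp add: words_def)
qed

lemma finite_words: "finite (words q n)"
proof -
  have "words q n = {xs. set xs \<subseteq> {1..q} \<and> length xs = n}" by (auto simp: words_def)
  then show ?thesis using finite_lists_length_eq[of "{1..q}" n] by simp
qed

lemma channel_sum:
  assumes x: "x \<in> words q n"
  shows "(\<Sum>y\<in>{y\<in>words q n. P (mset y)}. perm_channel n y x) = (if P (mset x) then 1 else 0)"
proof -
  define S where "S = {\<sigma>. \<sigma> permutes {..<n}}"
  define D where "D = {y\<in>words q n. P (mset y)}"
  have finS: "finite S" unfolding S_def by (rule finite_permutations) simp
  have finD: "finite D" unfolding D_def using finite_words by simp
  have cardS: "card S = fact n" unfolding S_def by (rule card_permutations) auto
  have c: "real (card {\<sigma>. \<sigma> permutes {..<n} \<and> y = perm_word \<sigma> x})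
        = (\<Sum>\<sigma>\<in>S. if y = perm_word \<sigma> x then 1 else 0)" for y
  proof -
    have "(\<Sum>\<sigma>\<in>S. if y = perm_word \<sigma> x then 1 else (0::real)) = (\<Sum>\<sigma>\<in>{\<sigma>\<in>S. y = perm_word \<sigma> x}. 1)"
      using sum.inter_filter[OF finS, of "\<lambda>_. (1::real)"] by simp
    also have "\<dots> = real (card {\<sigma>. \<sigma> permutes {..<n} \<and> y = perm_word \<sigma> x})"
      by (simp add: S_def)
    finally show ?thesis by simp
  qed
  have "(\<Sum>y\<in>D. perm_channel n y x) = (1 / fact n) * (\<Sum>y\<in>D. \<Sum>\<sigma>\<in>S. if y = perm_word \<sigma> x then 1 else 0)"
    unfolding perm_channel_def c by (simp add: sum_distrib_left)
  also have "(\<Sum>y\<in>D. \<Sum>\<sigma>\<in>S. if y = perm_word \<sigma> x then 1 else (0::real))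
      = (\<Sum>\<sigma>\<in>S. \<Sum>y\<in>D. if y = perm_word \<sigma> x then 1 else 0)" by (rule sum.swap)
  also have "\<dots> = (\<Sum>\<sigma>\<in>S. if perm_word \<sigma> x \<in> D then 1 else 0)"
    using finD by (simp add: sum.delta)
  also have "\<dots> = (\<Sum>\<sigma>\<in>S. if P (mset x) then 1 else 0)"
  proof (rule sum.cong)
    fix \<sigma> assume "\<sigma> \<in> S"
    then have "\<sigma> permutes {..<n}" by (simp add: S_def)
    from perm_word_props[OF this x] show "(if perm_word \<sigma> x \<in> D then 1 else (0::real)) = (if P (mset x) then 1 else 0)"
      by (simp add: D_def)
  qed simp
  also have "\<dots> = fact n * (if P (mset x) then 1 else 0)" using cardS by simp
  finally show ?thesis by (simp add: D_def)
qed

lemma nbhd_card: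
  fixes a b t :: nat
  assumes "f \<in> (\<Pi>\<^sub>E k\<in>{..<a}. {..<b})"
  shows "card {g \<in> (\<Pi>\<^sub>E k\<in>{..<a}. {..<b}). t \<le> card {k\<in>{..<a}. f k = g k}} \<le> (a choose t) * b^(a-t)"
proof -
  define Ts where "Ts = {T. T \<subseteq> {..<a} \<and> card T = t}"
  define P where "P T = (\<Pi>\<^sub>E k\<in>{..<a}. if k\<in>T then {f k} else {..<b})" for T
  have finTs: "finite Ts" unfolding Ts_def by (rule finite_subset[of _ "Pow {..<a}"]) auto
  have cTs: "card Ts = a choose t" unfolding Ts_def using n_subsets[of "{..<a}" t] by simp
  have cP: "card (P T) = b^(a-t)" if "T \<in> Ts" for T
  proof -
    have T: "T \<subseteq> {..<a}" "card T = t" using that by (auto simp: Ts_def)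
    have "card (P T) = (\<Prod>k\<in>{..<a}. card (if k\<in>T then {f k} else {..<b}))"
      unfolding P_def by (rule card_PiE) simp
    also have "\<dots> = (\<Prod>k\<in>{..<a}. if k\<in>T then 1 else b)"
      by (rule prod.cong) auto
    also have "\<dots> = (\<Prod>k\<in>{..<a} - T. b)"
    proof -
      have eq: "{..<a} \<inter> -T = {..<a} - T" by blast
      have "(\<Prod>k\<in>{..<a}. if k\<in>T then 1 else b) = (\<Prod>k\<in>{..<a} \<inter> -T. b)"
        using prod.If_cases[of "{..<a}" "\<lambda>k. k\<in>T" "\<lambda>_. 1" "\<lambda>_. b"] by simp
      then show ?thesis by (simp only: eq)
    qed
    also have "\<dots> = b^(a-t)" using T by (simp add: card_Diff_subset finite_subset)
    finally show ?thesis .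
  qed
  have sub: "{g \<in> (\<Pi>\<^sub>E k\<in>{..<a}. {..<b}). t \<le> card {k\<in>{..<a}. f k = g k}} \<subseteq> (\<Union>T\<in>Ts. P T)"
  proof
    fix g assume g: "g \<in> {g \<in> (\<Pi>\<^sub>E k\<in>{..<a}. {..<b}). t \<le> card {k\<in>{..<a}. f k = g k}}"
    then obtain T where T: "T \<subseteq> {k\<in>{..<a}. f k = g k}" "card T = t"
      proof -
      have "t \<le> card {k\<in>{..<a}. f k = g k}" using g by simp
      then show ?thesis using obtain_subset_with_card_n that by blast
    qed
    have "T \<in> Ts" using T by (auto simp: Ts_def)
    moreover have "g \<in> P T" using g T unfolding P_def by (auto simp: PiE_iff)
    ultimately show "g \<in> (\<Union>T\<in>Ts. P T)" by blast
  qed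
  have "card {g \<in> (\<Pi>\<^sub>E k\<in>{..<a}. {..<b}). t \<le> card {k\<in>{..<a}. f k = g k}} \<le> card (\<Union>T\<in>Ts. P T)"
    by (rule card_mono[OF _ sub]) (auto simp: P_def finTs intro!: finite_PiE)
  also have "\<dots> \<le> (\<Sum>T\<in>Ts. card (P T))" by (rule card_UN_le[OF finTs])
  also have "\<dots> = (a choose t) * b^(a-t)" using cP cTs by simp
  finally show ?thesis .
qed

lemma gv:
  fixes a b t :: nat
  assumes "1 \<le> t" "t \<le> a"
  shows "\<exists>C. C \<subseteq> (\<Pi>\<^sub>E k\<in>{..<a}. {..<b}) \<and>
     (\<forall>f\<in>C. \<forall>g\<in>C. f \<noteq> g \<longrightarrow> card {k\<in>{..<a}. f k = g k} < t) \<and>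
     b^a \<le> card C * ((a choose t) * b^(a-t))"
proof -
  define F where "F = (\<Pi>\<^sub>E k\<in>{..<a}. {..<b})"
  define ok where "ok C \<longleftrightarrow> C \<subseteq> F \<and> (\<forall>f\<in>C. \<forall>g\<in>C. f \<noteq> g \<longrightarrow> card {k\<in>{..<a}. f k = g k} < t)" for C
  have finF: "finite F" unfolding F_def by (intro finite_PiE) auto
  have "ok {}" by (simp add: ok_def)
  moreover have "\<forall>C. ok C \<longrightarrow> card C < card F + 1"
    using finF by (auto simp: ok_def intro: card_mono le_imp_less_Suc)
  ultimately obtain C where C: "ok C" and max: "\<And>C'. ok C' \<Longrightarrow> card C' \<le> card C"
    using ex_has_greatest_nat[of ok "{}" card "card F + 1"] by blast
  have CF: "C \<subseteq> F" using C by (simp add: ok_def)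
  have finC: "finite C" using CF finF finite_subset by blast
  define Nb where "Nb f = {g \<in> F. t \<le> card {k\<in>{..<a}. f k = g k}}" for f
  have cover: "F \<subseteq> (\<Union>c\<in>C. Nb c)"
  proof
    fix g assume gF: "g \<in> F"
    show "g \<in> (\<Union>c\<in>C. Nb c)"
    proof (rule ccontr)
      assume nin: "g \<notin> (\<Union>c\<in>C. Nb c)"
      have gC: "g \<notin> C"
      proof
        assume "g \<in> C"
        moreover have "g \<in> Nb g" using gF assms by (simp add: Nb_def)
        ultimately show False using nin by blast
      qed
      have lt: "card {k\<in>{..<a}. c k = g k} < t" if "c \<in> C" for c
        using nin that gF by (auto simp: Nb_def)
      have lt2: "card {k\<in>{..<a}. g k = c k} < t" if "c \<in> C" for c
      proof -
        have "{k\<in>{..<a}. g k = c k} = {k\<in>{..<a}. c k = g k}" by auto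
        then show ?thesis using lt[OF that] by (simp only:)
      qed
      have "ok (insert g C)" unfolding ok_def
      proof (intro conjI ballI impI)
        show "insert g C \<subseteq> F" using CF gF by blast
      next
        fix f h assume f: "f \<in> insert g C" and h: "h \<in> insert g C" and ne: "f \<noteq> h"
        show "card {k\<in>{..<a}. f k = h k} < t"
        proof (cases "f = g")
          case True
          then have "h \<in> C" using h ne by auto
          then show ?thesis using lt2[of h] True by (simp only:)
        next
          case False
          then have fC: "f \<in> C" using f by auto
          show ?thesis
          proof (cases "h = g")
            case True then show ?thesis using lt[OF fC] by (simp only:)
          next
            case False
            then have "h \<in> C" using h by auto
            then show ?thesis using C fC ne unfolding ok_def by blast
          qed
        qed
      qed
      then have "card (insert g C) \<le> card C" by (rule max)
      then show False using gC finC by simp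
    qed
  qed
  have "b^a = card F" unfolding F_def by (simp add: card_PiE)
  also have "\<dots> \<le> card (\<Union>c\<in>C. Nb c)"
    by (rule card_mono[OF _ cover]) (use finC finF in \<open>auto simp: Nb_def\<close>)
  also have "\<dots> \<le> (\<Sum>c\<in>C. card (Nb c))" by (rule card_UN_le[OF finC])
  also have "\<dots> \<le> (\<Sum>c\<in>C. (a choose t) * b^(a-t))"
    by (rule sum_mono) (use CF nbhd_card in \<open>auto simp: Nb_def F_def\<close>)
  also have "\<dots> = card C * ((a choose t) * b^(a-t))" by simp
  finally have bnd: "b^a \<le> card C * ((a choose t) * b^(a-t))" .
  have "C \<subseteq> F \<and> (\<forall>f\<in>C. \<forall>g\<in>C. f \<noteq> g \<longrightarrow> card {k\<in>{..<a}. f k = g k} < t) \<and>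
     b^a \<le> card C * ((a choose t) * b^(a-t))" using C bnd unfolding ok_def by (intro conjI) auto
  then show ?thesis unfolding F_def by (rule exI[where x=C])
qed


fun enc :: "nat \<Rightarrow> nat list \<Rightarrow> nat list" where
  "enc j [] = []"
| "enc j (c # cs) = replicate c j @ enc (Suc j) cs"

lemma enc_count: "count (mset (enc j cs)) v = (if j \<le> v \<and> v < j + length cs then cs ! (v - j) else 0)"
proof (induction cs arbitrary: j)
  case Nil then show ?case by simp
next
  case (Cons c cs)
  show ?case
  proof (cases "v = j")
    case True then show ?thesis using Cons by simp
  next
    case False
    then have "count (mset (enc j (c # cs))) v = count (mset (enc (Suc j) cs)) v" by simp
    also have "\<dots> = (if Suc j \<le> v \<and> v < Suc j + length cs then cs ! (v - Suc j) else 0)" by (rule Cons)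
    also have "\<dots> = (if j \<le> v \<and> v < j + length (c # cs) then (c # cs) ! (v - j) else 0)"
    proof (cases "j < v")
      case True
      then have "v - j = Suc (v - Suc j)" by simp
      then have "(c # cs) ! (v - j) = cs ! (v - Suc j)" by simp
      then show ?thesis using True by auto
    next
      case False2: False
      then show ?thesis using False by auto
    qed
    finally show ?thesis .
  qed
qed

lemma enc_set: "set (enc j cs) \<subseteq> {j..<j + length cs}"
  by (induction cs arbitrary: j) force+

lemma enc_len: "length (enc j cs) = sum_list cs"
  by (induction cs arbitrary: j) auto

definition word :: "nat \<Rightarrow> nat \<Rightarrow> nat list \<Rightarrow> nat list" where
  "word q n cs = enc 1 cs @ replicate (n - sum_list cs) q"

lemma word_in:
  assumes "length cs = q - 1" "sum_list cs \<le> n" "q \<ge> 1"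
  shows "word q n cs \<in> words q n"
proof -
  have "set (enc 1 cs) \<subseteq> {1..q}" using enc_set[of 1 cs] assms by auto
  then show ?thesis using assms by (auto simp: word_def words_def enc_len)
qed

lemma word_count:
  assumes "length cs = q - 1" "i < q - 1"
  shows "count (mset (word q n cs)) (Suc i) = cs ! i"
  using assms by (simp add: word_def enc_count)

lemma word_inj:
  assumes "length cs = q - 1" "length ds = q - 1" "mset (word q n cs) = mset (word q n ds)"
  shows "cs = ds"
proof (rule nth_equalityI)
  show "length cs = length ds" using assms by simp
  fix i assume "i < length cs"
  then have i: "i < q - 1" using assms by simp
  show "cs ! i = ds ! i" using word_count[OF assms(1) i, of n] word_count[OF assms(2) i, of n] assms(3) by simp
qed

lemma sum_list_bound: "set cs \<subseteq> {..<m} \<Longrightarrow> sum_list cs \<le> length cs * m"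
  by (induction cs) auto

lemma grid_embed:
  assumes q: "q \<ge> 2" and ab: "a * b \<le> (n div q) ^ (q - 1)"
  shows "\<exists>E. (\<forall>p \<in> {..<a} \<times> {..<b}. E p \<in> words q n) \<and> inj_on (\<lambda>p. mset (E p)) ({..<a} \<times> {..<b})"
proof -
  define m where "m = n div q"
  define V where "V = {cs. set cs \<subseteq> {..<m} \<and> length cs = q - 1}"
  have finV: "finite V" unfolding V_def by (rule finite_lists_length_eq) simp
  have cV: "card V = m ^ (q - 1)" unfolding V_def using card_lists_length_eq[of "{..<m}" "q-1"] by simp
  have "card ({..<a} \<times> {..<b}) \<le> card V" using ab cV by (simp add: card_cartesian_product m_def)
  then obtain \<iota> where \<iota>: "\<iota> ` ({..<a} \<times> {..<b}) \<subseteq> V" "inj_on \<iota> ({..<a} \<times> {..<b})"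
    using card_le_inj[of "{..<a} \<times> {..<b}" V] finV by auto
  have sl: "sum_list cs \<le> n" if "cs \<in> V" for cs
  proof -
    have "sum_list cs \<le> length cs * m" using that sum_list_bound[of cs m] by (auto simp: V_def)
    also have "\<dots> \<le> q * m" using that by (simp add: V_def)
    also have "\<dots> \<le> n" unfolding m_def by simp
    finally show ?thesis .
  qed
  define E where "E p = word q n (\<iota> p)" for p
  have "\<forall>p \<in> {..<a} \<times> {..<b}. E p \<in> words q n"
  proof
    fix p assume "p \<in> {..<a} \<times> {..<b}"
    then have "\<iota> p \<in> V" using \<iota> by blast
    then show "E p \<in> words q n" unfolding E_def using q sl by (intro word_in) (auto simp: V_def)
  qed
  moreover have "inj_on (\<lambda>p. mset (E p)) ({..<a} \<times> {..<b})"
  proof (rule inj_onI)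
    fix p p' assume p: "p \<in> {..<a} \<times> {..<b}" and p': "p' \<in> {..<a} \<times> {..<b}"
      and e: "mset (E p) = mset (E p')"
    have "\<iota> p \<in> V" "\<iota> p' \<in> V" using \<iota> p p' by blast+
    then have "\<iota> p = \<iota> p'" using e unfolding E_def by (intro word_inj[of _ q _ n]) (auto simp: V_def)
    then show "p = p'" using \<iota>(2) p p' by (meson inj_onD)
  qed
  ultimately show ?thesis by blast
qed


lemma sum_Q:
  assumes "\<And>k. k < a \<Longrightarrow> e k \<in> W" "finite W"
  shows "(\<Sum>x\<in>W. ((\<Sum>k<a. if x = e k then 1 else 0) / real a) * g x) = (\<Sum>k<a. g (e k)) / real a"
proof -
  have "(\<Sum>x\<in>W. ((\<Sum>k<a. if x = e k then 1 else 0) / real a) * g x)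
      = (\<Sum>x\<in>W. \<Sum>k<a. (if x = e k then g x else 0) / real a)"
    by (rule sum.cong) (auto simp: sum_distrib_right sum_divide_distrib intro!: sum.cong)
  also have "\<dots> = (\<Sum>k<a. \<Sum>x\<in>W. (if x = e k then g x else 0) / real a)" by (rule sum.swap)
  also have "\<dots> = (\<Sum>k<a. g (e k) / real a)"
  proof (rule sum.cong)
    fix k assume "k \<in> {..<a}"
    then have ek: "e k \<in> W" using assms by simp
    have "(\<Sum>x\<in>W. (if x = e k then g x else 0) / real a) = (\<Sum>x\<in>W. if x = e k then g x / real a else 0)"
      by (rule sum.cong) auto
    also have "\<dots> = g (e k) / real a" using ek assms(2) by (simp add: sum.delta)
    finally show "(\<Sum>x\<in>W. (if x = e k then g x else 0) / real a) = g (e k) / real a" .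
  qed simp
  also have "\<dots> = (\<Sum>k<a. g (e k)) / real a" by (simp add: sum_divide_distrib)
  finally show ?thesis .
qed

lemma Max_insert0_le:
  fixes S :: "real set"
  assumes "finite S" "\<And>x. x \<in> S \<Longrightarrow> x \<le> B" "0 \<le> B"
  shows "Max (insert 0 S) \<le> B"
  using assms by (subst Max_le_iff) auto

lemma code_exists:
  assumes q: "q \<ge> 2" and t: "1 \<le> t" "t \<le> a" and ab: "a * b \<le> (n div q) ^ (q - 1)"
  shows "\<exists>M Q D. is_ID_code q n M Q D \<and> b^a \<le> M * ((a choose t) * b^(a-t))
     \<and> type1_err q n M Q D = 0 \<and> type2_err q n M Q D \<le> real (t - 1) / real a"
proof -
  from grid_embed[OF q ab] obtain E where E0: "\<forall>p \<in> {..<a} \<times> {..<b}. E p \<in> words q n"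
    and Einj: "inj_on (\<lambda>p. mset (E p)) ({..<a} \<times> {..<b})"
    by (elim exE conjE)
  have E: "E p \<in> words q n" if "p \<in> {..<a} \<times> {..<b}" for p using E0 that by (rule bspec)
  from gv[OF t, of b] obtain C where CF: "C \<subseteq> (\<Pi>\<^sub>E k\<in>{..<a}. {..<b})"
    and Cd0: "\<forall>f\<in>C. \<forall>g\<in>C. f \<noteq> g \<longrightarrow> card {k\<in>{..<a}. f k = g k} < t"
    and Cb: "b^a \<le> card C * ((a choose t) * b^(a-t))"
    by (elim exE conjE)
  have Cd: "card {k\<in>{..<a}. f k = g k} < t" if "f \<in> C" "g \<in> C" "f \<noteq> g" for f g
    using Cd0 that by simp
  define M where "M = card C"
  have finC: "finite C" using CF by (rule finite_subset) (auto intro!: finite_PiE)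
  obtain h where h: "bij_betw h {1..M} C" unfolding M_def using ex_bij_betw_nat_finite_1[OF finC] by blast
  have hC: "h i \<in> C" if "i \<in> {1..M}" for i using h that by (auto dest: bij_betwE)
  have hb: "h i k < b" if "i \<in> {1..M}" "k < a" for i k using hC[OF that(1)] CF that(2) by (auto simp: PiE_iff)
  define e where "e i k = E (k, h i k)" for i k
  have eW: "e i k \<in> words q n" if "i \<in> {1..M}" "k < a" for i k
    unfolding e_def using hb[OF that] that by (intro E) auto
  define Q where "Q i x = (\<Sum>k<a. if x = e i k then 1 else 0) / real a" for i x
  define P where "P i z = (\<exists>k<a. z = mset (e i k))" for i z
  define D where "D i = {y \<in> words q n. P i (mset y)}" for i
  have a1: "a \<ge> 1" using t by simp
  have Pequiv: "P j (mset (e i k)) \<longleftrightarrow> h i k = h j k" if "i \<in> {1..M}" "j \<in> {1..M}" "k < a" for i j k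
  proof
    assume "P j (mset (e i k))"
    then obtain k' where k': "k' < a" "mset (e i k) = mset (e j k')" by (auto simp: P_def)
    then have "(k, h i k) = (k', h j k')"
      using Einj hb that k' unfolding e_def by (intro inj_onD[OF Einj]) auto
    then show "h i k = h j k" by auto
  next
    assume "h i k = h j k"
    then show "P j (mset (e i k))" using that unfolding P_def e_def by auto
  qed
  have errto: "err_to q n (Q i) (D j) = real (card {k\<in>{..<a}. h i k = h j k}) / real a"
    if "i \<in> {1..M}" "j \<in> {1..M}" for i j
  proof -
    have "err_to q n (Q i) (D j) = (\<Sum>x\<in>words q n. Q i x * (if P j (mset x) then 1 else 0))"
      unfolding err_to_def D_def by (rule sum.cong) (auto simp: channel_sum)
    also have "\<dots> = (\<Sum>k<a. (if P j (mset (e i k)) then 1 else 0)) / real a"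
      unfolding Q_def by (rule sum_Q) (use eW that finite_words in auto)
    also have "\<dots> = (\<Sum>k<a. (if h i k = h j k then 1 else 0)) / real a"
      using Pequiv that by simp
    also have "(\<Sum>k<a. (if h i k = h j k then 1 else 0::real)) = real (card {k\<in>{..<a}. h i k = h j k})"
      using sum.inter_filter[of "{..<a}" "\<lambda>_. 1::real" "\<lambda>k. h i k = h j k"] by simp
    finally show ?thesis .
  qed
  have errnot: "err_not_to q n (Q i) (D i) = 0" if "i \<in> {1..M}" for i
  proof -
    have sD: "words q n - D i = {y \<in> words q n. \<not> P i (mset y)}" by (auto simp: D_def)
    have "err_not_to q n (Q i) (D i) = (\<Sum>x\<in>words q n. Q i x * (if \<not> P i (mset x) then 1 else 0))"
      unfolding err_not_to_def sD by (rule sum.cong) (auto simp: channel_sum[of _ q n "\<lambda>z. \<not> P i z"])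
    also have "\<dots> = (\<Sum>k<a. (if \<not> P i (mset (e i k)) then 1 else 0)) / real a"
      unfolding Q_def by (rule sum_Q) (use eW that finite_words in auto)
    also have "\<dots> = 0"
    proof -
      have "\<And>k. k < a \<Longrightarrow> P i (mset (e i k))" by (auto simp: P_def)
      then show ?thesis by simp
    qed
    finally show ?thesis .
  qed
  have code: "is_ID_code q n M Q D"
    unfolding is_ID_code_def
  proof (intro ballI conjI allI impI)
    fix i assume i: "i \<in> {1..M}"
    fix x
    show "0 \<le> Q i x" if "x \<in> words q n" unfolding Q_def by (auto intro!: sum_nonneg divide_nonneg_nonneg)
    show "Q i x = 0" if "x \<notin> words q n"
    proof -
      have "\<And>k. k < a \<Longrightarrow> x \<noteq> e i k" using eW[OF i] that by auto
      then show ?thesis unfolding Q_def by simp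
    qed
  next
    fix i assume i: "i \<in> {1..M}"
    have "(\<Sum>x\<in>words q n. Q i x) = (\<Sum>x\<in>words q n. Q i x * 1)" by simp
    also have "\<dots> = (\<Sum>k<a. 1) / real a"
      unfolding Q_def by (rule sum_Q) (use eW i finite_words in auto)
    also have "\<dots> = 1" using a1 by simp
    finally show "(\<Sum>x\<in>words q n. Q i x) = 1" .
    show "D i \<subseteq> words q n" by (auto simp: D_def)
  qed
  have t1: "type1_err q n M Q D = 0"
  proof -
    have "insert 0 {err_not_to q n (Q i) (D i) | i. i \<in> {1..M}} = {0}" using errnot by auto
    then show ?thesis unfolding type1_err_def by (simp only: Max_singleton)
  qed
  have t2: "type2_err q n M Q D \<le> real (t - 1) / real a"
    unfolding type2_err_def
  proof (rule Max_insert0_le)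
    have "{err_to q n (Q i) (D j) | i j. i \<in> {1..M} \<and> j \<in> {1..M} \<and> i \<noteq> j}
        \<subseteq> (\<lambda>(i, j). err_to q n (Q i) (D j)) ` ({1..M} \<times> {1..M})" by auto
    then show "finite {err_to q n (Q i) (D j) | i j. i \<in> {1..M} \<and> j \<in> {1..M} \<and> i \<noteq> j}"
      by (rule finite_subset) simp
  next
    show "0 \<le> real (t - 1) / real a" by simp
  next
    fix z assume "z \<in> {err_to q n (Q i) (D j) | i j. i \<in> {1..M} \<and> j \<in> {1..M} \<and> i \<noteq> j}"
    then obtain i j where ij: "i \<in> {1..M}" "j \<in> {1..M}" "i \<noteq> j" and z: "z = err_to q n (Q i) (D j)" by blast
    have "h i \<noteq> h j" using h ij by (metis bij_betw_imp_inj_on inj_onD)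
    then have "card {k\<in>{..<a}. h i k = h j k} < t" using Cd[OF hC[OF ij(1)] hC[OF ij(2)]] by simp
    then have "card {k\<in>{..<a}. h i k = h j k} \<le> t - 1" by simp
    then have "real (card {k\<in>{..<a}. h i k = h j k}) \<le> real (t - 1)" by linarith
    then show "z \<le> real (t - 1) / real a" using z errto[OF ij(1,2)] a1
      by (simp add: divide_right_mono)
  qed
  have "is_ID_code q n M Q D \<and> b^a \<le> M * ((a choose t) * b^(a-t))
     \<and> type1_err q n M Q D = 0 \<and> type2_err q n M Q D \<le> real (t - 1) / real a"
    using code t1 t2 Cb unfolding M_def by (intro conjI)
  then show ?thesis by (intro exI)
qed


lemma n_pow_bound:
  fixes q n :: nat
  assumes "q \<ge> 1" "n \<ge> q"
  shows "n ^ (q - 1) \<le> (2 * q) ^ (q - 1) * (n div q) ^ (q - 1)"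
proof -
  have m1: "n div q \<ge> 1" using assms by (simp add: Suc_le_eq div_greater_zero_iff)
  have "n < q * (n div q) + q" using assms
    using mod_less_divisor[of q n] mult_div_mod_eq[of q n] assms by linarith
  also have "\<dots> \<le> 2 * q * (n div q)" using m1 by (simp add: algebra_simps)
  finally have "n \<le> 2 * q * (n div q)" by simp
  then have "n ^ (q - 1) \<le> (2 * q * (n div q)) ^ (q - 1)" by (rule power_mono) simp
  then show ?thesis by (simp add: power_mult_distrib)
qed

lemma step:
  fixes q n a r :: nat and \<eta> :: real
  assumes q: "q \<ge> 2" and n: "n \<ge> q" and eta: "\<eta> > 0" and eta1: "\<eta> * real n ^ (q - 1) \<ge> 1"
    and a: "a = nat \<lceil>\<eta> * real n ^ (q - 1)\<rceil>" and r: "r \<ge> 4"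
    and rb: "2 ^ r \<le> 1 / (4 * real ((2 * q) ^ (q - 1)) * \<eta>)"
  shows "\<exists>M Q D. is_ID_code q n M Q D \<and> 2 ^ a \<le> M
     \<and> type1_err q n M Q D = 0 \<and> type2_err q n M Q D \<le> 2 / real r"
proof -
  define K where "K = (2 * q) ^ (q - 1)"
  define t where "t = 2 * a div r + 1"
  define b :: nat where "b = 2 ^ r"
  have K1: "K \<ge> 1" unfolding K_def using q by simp
  have a_ge: "real a \<ge> \<eta> * real n ^ (q - 1)" unfolding a by linarith
  have a_le: "real a \<le> 2 * (\<eta> * real n ^ (q - 1))"
  proof -
    have "real_of_int \<lceil>\<eta> * real n ^ (q - 1)\<rceil> - 1 < \<eta> * real n ^ (q - 1)"
      using ceiling_correct by blast
    moreover have "\<lceil>\<eta> * real n ^ (q - 1)\<rceil> \<ge> 0" using eta1 by simp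
    then have "real a = real_of_int \<lceil>\<eta> * real n ^ (q - 1)\<rceil>" using a by simp
    ultimately show ?thesis using eta1 by linarith
  qed
  have a1: "a \<ge> 1" using a_ge eta1 by linarith
  have t1: "1 \<le> t" by (simp add: t_def)
  have "2 * a div r \<le> 2 * a div 4" using r by (intro div_le_mono2) auto
  then have ta: "t \<le> a" unfolding t_def using a1 by (cases "a = 1") auto
  have ab: "a * b \<le> (n div q) ^ (q - 1)"
  proof -
    have "real (a * b) = real a * 2 ^ r" by (simp add: b_def)
    also have "\<dots> \<le> 2 * (\<eta> * real n ^ (q - 1)) * (1 / (4 * real K * \<eta>))"
      using a_le rb unfolding K_def by (intro mult_mono) auto
    also have "\<dots> = real n ^ (q - 1) / (2 * real K)" using eta K1 by (simp add: field_simps)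
    also have "\<dots> \<le> real n ^ (q - 1) / real K" using K1 by (simp add: frac_le)
    also have "\<dots> \<le> real ((n div q) ^ (q - 1))"
    proof -
      have "n ^ (q - 1) \<le> K * (n div q) ^ (q - 1)" unfolding K_def using n q by (intro n_pow_bound) auto
      then have "real n ^ (q - 1) \<le> real K * real ((n div q) ^ (q - 1))"
        by (metis of_nat_le_iff of_nat_mult of_nat_power)
      then show ?thesis using K1 by (simp add: field_simps)
    qed
    finally show ?thesis by linarith
  qed
  obtain M Q D where MQD: "is_ID_code q n M Q D" "b^a \<le> M * ((a choose t) * b^(a-t))"
    "type1_err q n M Q D = 0" "type2_err q n M Q D \<le> real (t - 1) / real a"
    using code_exists[OF q t1 ta ab] by (elim exE conjE)
  have M: "2 ^ a \<le> M"
  proof -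
    have h1: "2 * a mod r < r" using r by simp
    have h2: "r * (2 * a div r) + 2 * a mod r = 2 * a" by (rule mult_div_mod_eq)
    have "2 * a < r * t" unfolding t_def distrib_left using h1 h2 by linarith
    then have "(2::nat) ^ (2 * a) \<le> 2 ^ (r * t)" by (intro power_increasing) auto
    also have "\<dots> = b ^ t" by (simp add: b_def power_mult)
    finally have bt: "2 ^ (2 * a) \<le> b ^ t" .
    have "b ^ a = b ^ t * b ^ (a - t)" using ta by (simp add: power_add[symmetric])
    then have "2 ^ (2 * a) * b ^ (a - t) \<le> M * ((a choose t) * b ^ (a - t))"
      using bt MQD(2) by (metis mult_le_mono1 order_trans)
    also have "\<dots> \<le> M * (2 ^ a * b ^ (a - t))"
      by (intro mult_le_mono2 mult_le_mono1 binomial_le_pow2)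
    finally have "2 ^ (2 * a) * b ^ (a - t) \<le> (M * 2 ^ a) * b ^ (a - t)"
      by (simp only: mult.assoc)
    moreover have "b ^ (a - t) > 0" by (simp add: b_def)
    ultimately have "2 ^ (2 * a) \<le> M * 2 ^ a" by (metis mult_le_cancel2)
    moreover have "(2::nat) ^ (2 * a) = 2 ^ a * 2 ^ a" by (simp add: mult_2 power_add)
    ultimately have "2 ^ a * 2 ^ a \<le> M * (2::nat) ^ a" by simp
    then show ?thesis by simp
  qed
  have T2: "type2_err q n M Q D \<le> 2 / real r"
  proof -
    have "real (t - 1) = real (2 * a div r)" by (simp add: t_def)
    also have "\<dots> \<le> real (2 * a) / real r"
    proof -
      have "r * (2 * a div r) \<le> 2 * a" by (rule times_div_less_eq_dividend)
      then have "real r * real (2 * a div r) \<le> real (2 * a)" by (metis of_nat_le_iff of_nat_mult)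
      then show ?thesis using r by (simp add: pos_le_divide_eq mult.commute)
    qed
    finally have tt: "real (t - 1) \<le> real (2 * a) / real r" .
    have "real (t - 1) / real a \<le> (real (2 * a) / real r) / real a"
      by (rule divide_right_mono[OF tt]) simp
    also have "\<dots> = 2 / real r" using a1 by simp
    finally show ?thesis using MQD(4) by linarith
  qed
  show ?thesis using MQD(1,3) M T2 by (intro exI conjI)
qed


lemma log_floor_bound:
  fixes X :: real and R :: nat
  assumes X: "X > 2 ^ R"
  shows "R \<le> nat \<lfloor>log 2 X\<rfloor> \<and> 2 ^ nat \<lfloor>log 2 X\<rfloor> \<le> X"
proof -
  have Xp: "X > 0" using X by (smt (verit) zero_less_power)
  have "2 powr real R < X" using X by (simp add: powr_realpow)
  then have L: "real R < log 2 X" using Xp by (simp add: less_log_iff)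
  then have fl: "int R \<le> \<lfloor>log 2 X\<rfloor>" by (simp add: le_floor_iff)
  then have R: "R \<le> nat \<lfloor>log 2 X\<rfloor>" by simp
  have "(2::real) ^ nat \<lfloor>log 2 X\<rfloor> = 2 powr real (nat \<lfloor>log 2 X\<rfloor>)" by (simp add: powr_realpow)
  also have "real (nat \<lfloor>log 2 X\<rfloor>) = real_of_int \<lfloor>log 2 X\<rfloor>" using fl by simp
  also have "2 powr real_of_int \<lfloor>log 2 X\<rfloor> \<le> 2 powr log 2 X" by (intro powr_mono) auto
  also have "\<dots> = X" using Xp by simp
  finally show ?thesis using R by simp
qed

theorem theorem1:
  fixes q :: nat and \<epsilon> :: "nat \<Rightarrow> real"
  assumes "q \<ge> 2"
    and "\<And>n. n \<ge> 1 \<Longrightarrow> \<epsilon> n > 0"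
    and "\<epsilon> \<longlonglongrightarrow> 0"
  shows "\<exists>(M :: nat \<Rightarrow> nat) (Q :: nat \<Rightarrow> nat \<Rightarrow> nat list \<Rightarrow> real) (D :: nat \<Rightarrow> nat \<Rightarrow> nat list set).
           (\<forall>\<^sub>F n in sequentially.
              is_ID_code q n (M n) (Q n) (D n)
              \<and> real (M n) \<ge> 2 powr (\<epsilon> n * real n ^ (q - 1))
              \<and> type1_err q n (M n) (Q n) (D n) = 0)
           \<and> (\<lambda>n. type2_err q n (M n) (Q n) (D n)) \<longlonglongrightarrow> 0"
proof -
  note q = assms(1)
  define K :: nat where "K = (2 * q) ^ (q - 1)"
  have K1: "K \<ge> 1" unfolding K_def using q by simp
  define \<eta> where "\<eta> n = max (\<epsilon> n) (1 / real n)" for n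
  define X where "X n = 1 / (4 * real K * \<eta> n)" for n
  define r where "r n = nat \<lfloor>log 2 (X n)\<rfloor>" for n
  define a where "a n = nat \<lceil>\<eta> n * real n ^ (q - 1)\<rceil>" for n
  define good where "good n \<longleftrightarrow> n \<ge> q \<and> r n \<ge> 4 \<and> (2::real) ^ (r n) \<le> X n" for n
  have etapos: "\<eta> n > 0" if "n \<ge> 1" for n unfolding \<eta>_def using that by (simp add: less_max_iff_disj)
  have eta1: "\<eta> n * real n ^ (q - 1) \<ge> 1" if "n \<ge> 1" for n
  proof -
    have "real n ^ 1 \<le> real n ^ (q - 1)" using that q by (intro power_increasing) auto
    then have "real n \<le> real n ^ (q - 1)" by simp
    moreover have "\<eta> n \<ge> 1 / real n" unfolding \<eta>_def by simp
    ultimately have "1 / real n * real n \<le> \<eta> n * real n ^ (q - 1)"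
      using that etapos[OF that] by (intro mult_mono) auto
    then show ?thesis using that by simp
  qed
  define Prop where "Prop n T \<longleftrightarrow> is_ID_code q n (fst T) (fst (snd T)) (snd (snd T)) \<and> 2 ^ (a n) \<le> fst T
     \<and> type1_err q n (fst T) (fst (snd T)) (snd (snd T)) = 0
     \<and> type2_err q n (fst T) (fst (snd T)) (snd (snd T)) \<le> 2 / real (r n)" for n T
  have "\<forall>n. \<exists>T. good n \<longrightarrow> Prop n T"
  proof
    fix n
    show "\<exists>T. good n \<longrightarrow> Prop n T"
    proof (cases "good n")
      case True
      then have n: "n \<ge> q" and r4: "r n \<ge> 4" and rb: "(2::real) ^ (r n) \<le> X n" by (auto simp: good_def)
      have n1: "n \<ge> 1" using n q by simp
      obtain M Q D where "is_ID_code q n M Q D \<and> 2 ^ a n \<le> M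
         \<and> type1_err q n M Q D = 0 \<and> type2_err q n M Q D \<le> 2 / real (r n)"
        using step[OF q n etapos[OF n1] eta1[OF n1] a_def r4 rb[unfolded X_def K_def]] by (elim exE)
      then have "Prop n (M, Q, D)" by (simp add: Prop_def)
      then show ?thesis by blast
    qed simp
  qed
  then obtain T where T: "\<And>n. good n \<Longrightarrow> Prop n (T n)" by (metis choice)
  define M where "M n = fst (T n)" for n
  define Q where "Q n = fst (snd (T n))" for n
  define D where "D n = snd (snd (T n))" for n
  have etalim: "\<eta> \<longlonglongrightarrow> 0"
  proof -
    have "(\<lambda>n. max (\<epsilon> n) (1 / real n)) \<longlonglongrightarrow> max 0 0"
      by (intro tendsto_max assms(3) lim_1_over_n)
    then show ?thesis unfolding \<eta>_def by simp
  qed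
  have rlarge: "\<forall>\<^sub>F n in sequentially. R \<le> r n \<and> (2::real) ^ (r n) \<le> X n" for R :: nat
  proof -
    have pos: "1 / (4 * real K * 2 ^ R) > (0::real)" using K1 by simp
    have "\<forall>\<^sub>F n in sequentially. \<eta> n < 1 / (4 * real K * 2 ^ R)"
      using order_tendstoD(2)[OF etalim pos] .
    moreover have "\<forall>\<^sub>F n in sequentially. n \<ge> 1" by (rule eventually_ge_at_top)
    ultimately show ?thesis
    proof eventually_elim
      case (elim n)
      have ep: "\<eta> n > 0" using etapos elim(2) by simp
      have "2 ^ R < X n"
      proof -
        have "\<eta> n * (4 * real K * 2 ^ R) < 1" using elim(1) K1 by (simp add: field_simps)
        then show ?thesis unfolding X_def using ep K1 by (simp add: field_simps)
      qed
      from log_floor_bound[OF this] show ?case unfolding r_def by simp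
    qed
  qed
  have ev_good: "\<forall>\<^sub>F n in sequentially. good n"
    using rlarge[of 4] eventually_ge_at_top[of q] by eventually_elim (auto simp: good_def)
  have rlim: "filterlim (\<lambda>n. r n) at_top sequentially"
    unfolding filterlim_at_top
  proof
    fix Z :: nat
    show "\<forall>\<^sub>F n in sequentially. Z \<le> r n" using rlarge[of Z] by (rule eventually_mono) simp
  qed
  have inv_lim: "(\<lambda>n. 2 / real (r n)) \<longlonglongrightarrow> 0"
  proof -
    have "filterlim (\<lambda>n. real (r n)) at_top sequentially"
      using filterlim_compose[OF filterlim_real_sequentially rlim] by simp
    then have "filterlim (\<lambda>n. real (r n)) at_infinity sequentially"
      by (rule filterlim_at_top_imp_at_infinity)
    then show ?thesis by (intro tendsto_divide_0[OF tendsto_const])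
  qed
  have main: "\<forall>\<^sub>F n in sequentially.
              is_ID_code q n (M n) (Q n) (D n)
              \<and> real (M n) \<ge> 2 powr (\<epsilon> n * real n ^ (q - 1))
              \<and> type1_err q n (M n) (Q n) (D n) = 0
              \<and> 0 \<le> type2_err q n (M n) (Q n) (D n)
              \<and> type2_err q n (M n) (Q n) (D n) \<le> 2 / real (r n)"
    using ev_good
  proof eventually_elim
    case (elim n)
    have P: "Prop n (T n)" using T elim by simp
    have n1: "n \<ge> 1" using elim q by (simp add: good_def)
    have "\<epsilon> n * real n ^ (q - 1) \<le> \<eta> n * real n ^ (q - 1)"
      unfolding \<eta>_def by (intro mult_right_mono) auto
    also have "\<dots> \<le> real (a n)" unfolding a_def by linarith
    finally have ea: "\<epsilon> n * real n ^ (q - 1) \<le> real (a n)" .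
    have "2 powr (\<epsilon> n * real n ^ (q - 1)) \<le> 2 powr real (a n)" using ea by (intro powr_mono) auto
    also have "\<dots> = 2 ^ a n" by (simp add: powr_realpow)
    also have "\<dots> \<le> real (M n)" using P unfolding Prop_def M_def
      by (metis of_nat_le_iff of_nat_numeral of_nat_power)
    finally have Mb: "2 powr (\<epsilon> n * real n ^ (q - 1)) \<le> real (M n)" .
    have t2pos: "0 \<le> type2_err q n (M n) (Q n) (D n)"
    proof -
      have "{err_to q n (Q n i) (D n j) | i j. i \<in> {1..M n} \<and> j \<in> {1..M n} \<and> i \<noteq> j}
          \<subseteq> (\<lambda>(i, j). err_to q n (Q n i) (D n j)) ` ({1..M n} \<times> {1..M n})" by auto
      then have "finite {err_to q n (Q n i) (D n j) | i j. i \<in> {1..M n} \<and> j \<in> {1..M n} \<and> i \<noteq> j}"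
        by (rule finite_subset) simp
      then show ?thesis unfolding type2_err_def by (intro Max_ge) auto
    qed
    show ?case using P Mb t2pos unfolding Prop_def M_def Q_def D_def by (intro conjI) auto
  qed
  have lim: "(\<lambda>n. type2_err q n (M n) (Q n) (D n)) \<longlonglongrightarrow> 0"
  proof (rule tendsto_sandwich[OF _ _ tendsto_const inv_lim])
    show "\<forall>\<^sub>F n in sequentially. 0 \<le> type2_err q n (M n) (Q n) (D n)"
      using main by (rule eventually_mono) auto
    show "\<forall>\<^sub>F n in sequentially. type2_err q n (M n) (Q n) (D n) \<le> 2 / real (r n)"
      using main by (rule eventually_mono) auto
  qed
  have ev: "\<forall>\<^sub>F n in sequentially.
              is_ID_code q n (M n) (Q n) (D n)
              \<and> real (M n) \<ge> 2 powr (\<epsilon> n * real n ^ (q - 1))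
              \<and> type1_err q n (M n) (Q n) (D n) = 0"
    using main by (rule eventually_mono) auto
  show ?thesis using ev lim by (intro exI conjI)
qed

end
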